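(* Let $R_n(x)=\sum_{k=0}^nR_{n,k}x^k$ for $n\ge1$. For integers $n\ge k\ge 0$ let $B_{n,k}=B_{n,k}(x_1,x_2,\dots,x_{n-k+1})$ be the partial Bell polynomials, defined by $\sum_{n\ge k}B_{n,k}\frac{t^n}{n!}=\frac1{k!}\big(\sum_{i\ge1}x_i\frac{t^i}{i!}\big)^k$. When $x_i=(1-x^2)^{\lfloor (i-1)/2\rfloor}$ for each $i\ge1$, we have, for $n\ge 1$, $$R_{n+1}(x)=\sum_{k=1}^{n}(-1)^{n-k}k!\,(1+x)^{k+1}B_{n,k}.$$
   Context: Let $D$ be the derivation of $\mathbb{Q}[y,z]$ with $D(y)=z^2$, $D(z)=yz$ (corresponding to $d/dx$ with $y=\tan x$, $z=\sec x$). The integers $R_{n,k}$ are defined for $n\ge1$ by $D^n(y+z)=\sum_{k=0}^nR_{n,k}y^{n-k}z^{k+1}$ in $\mathbb{Q}[y,z]$. Equivalently, $R_1(x)=1+x$ and $R_{n+1}(x)=(1+nx^2)R_n(x)+x(1-x^2)R_n'(x)$ for $n\ge1$. *)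

theory Defs
  imports "HOL-Computational_Algebra.Computational_Algebra"
begin

text \<open>R_n(x) = sum_k R_{n,k} x^k, via the recurrence R_1 = 1 + x,
  R_{n+1} = (1 + n x^2) R_n + x (1 - x^2) R_n'. R 0 is unused (set to 0).\<close>
fun R :: "nat \<Rightarrow> int poly" where
  "R 0 = 0"
| "R (Suc 0) = [:1, 1:]"
| "R (Suc (Suc n)) =
     (1 + smult (of_nat (Suc n)) ([:0, 1:] ^ 2)) * R (Suc n)
     + [:0, 1:] * (1 - [:0, 1:] ^ 2) * pderiv (R (Suc n))"

text \<open>Partial Bell polynomial B_{n,k}(x_1,x_2,...) evaluated at the sequence xs
  (xs 0 is ignored), defined by the generating function
  sum_{n} B_{n,k} t^n/n! = (1/k!) (sum_{i>=1} x_i t^i / i!)^k.\<close>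
definition partial_bell :: "(nat \<Rightarrow> 'a::field_char_0) \<Rightarrow> nat \<Rightarrow> nat \<Rightarrow> 'a" where
  "partial_bell xs n k =
     fact n * fps_nth (fps_const (inverse (fact k))
        * (Abs_fps (\<lambda>i. if i = 0 then 0 else xs i / fact i)) ^ k) n"

end

theory Submission
  imports Defs
begin

abbreviation mi :: "int poly \<Rightarrow> real poly" where "mi \<equiv> map_poly of_int"

lemma mi_add: "mi (p + q) = mi p + mi q"
  by (rule poly_eqI) (simp add: coeff_map_poly)
lemma mi_diff: "mi (p - q) = mi p - mi q"
  by (rule poly_eqI) (simp add: coeff_map_poly)
lemma mi_smult: "mi (smult a p) = smult (of_int a) (mi p)"
  by (rule poly_eqI) (simp add: coeff_map_poly)
lemma mi_pCons: "mi (pCons a p) = pCons (of_int a) (mi p)"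
  by (simp add: map_poly_pCons)
lemma mi_mult: "mi (p * q) = mi p * mi q"
  by (induction p) (simp_all add: mi_add mi_smult mi_pCons)
lemma mi_1: "mi 1 = 1" by simp
lemma mi_pow: "mi (p ^ n) = mi p ^ n"
  by (induction n) (simp_all add: mi_mult)
lemma mi_pderiv: "mi (pderiv p) = pderiv (mi p)"
  by (rule poly_eqI) (simp add: coeff_map_poly coeff_pderiv)
lemma mi_X: "mi [:0,1:] = [:0,1:]" by (simp add: mi_pCons)

definition xx :: "real poly" where "xx = [:0,1:]"
definition cc :: "real poly" where "cc = 1 - xx^2"

lemma mi_R_rec: "mi (R (Suc (Suc n))) =
   (1 + smult (of_nat (Suc n)) (xx ^ 2)) * mi (R (Suc n)) + xx * cc * pderiv (mi (R (Suc n)))"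
  unfolding R.simps mi_add mi_mult mi_smult mi_pow mi_pderiv mi_diff mi_X mi_1 xx_def cc_def by simp


definition Gr :: "real poly fps" where
  "Gr = Abs_fps (\<lambda>n. smult (inverse (fact n)) (mi (R (Suc n))))"
definition yv :: "nat \<Rightarrow> real poly" where
  "yv i = (-1) ^ (i - 1) * cc ^ ((i - 1) div 2)"
definition Pp :: "real poly fps" where
  "Pp = Abs_fps (\<lambda>n. if n = 0 then 1 else smult (inverse (fact n)) (- (1 + xx) * yv n))"
definition PD :: "real poly fps \<Rightarrow> real poly fps" where
  "PD F = Abs_fps (\<lambda>n. pderiv (F $ n))"
definition L :: "real poly fps \<Rightarrow> real poly fps" where
  "L F = fps_deriv F - fps_const (xx^2) * (fps_X * fps_deriv F) - fps_const (xx * cc) * PD F"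

lemma L_nth: "L F $ n = of_nat (Suc n) * F $ Suc n - xx^2 * (of_nat n * F $ n) - xx * cc * pderiv (F $ n)"
  by (cases n) (simp_all add: L_def PD_def)

lemma pderiv_sum: "pderiv (\<Sum>k\<in>A. p k) = (\<Sum>k\<in>A. pderiv (p k))"
  by (induction A rule: infinite_finite_induct) (simp_all add: pderiv_add)

lemma PD_mult: "PD (F * G) = PD F * G + F * PD G"
proof (rule fps_ext)
  fix n
  show "PD (F * G) $ n = (PD F * G + F * PD G) $ n"
    unfolding PD_def fps_mult_nth fps_add_nth fps_nth_Abs_fps pderiv_sum pderiv_mult sum.distrib[symmetric]
    by (rule sum.cong) (simp_all add: algebra_simps)
qed

lemma L_mult: "L (F * G) = L F * G + F * L G"
  unfolding L_def PD_mult fps_deriv_mult by (simp add: algebra_simps)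


lemma ofnat_smult: "(of_nat m :: real poly) * p = smult (of_nat m) p"
  by (simp add: of_nat_poly)

lemma L_Gr: "L Gr = fps_const (1 + xx^2) * Gr"
proof (rule fps_ext)
  fix n
  define k where "k = (inverse (fact n) :: real)"
  define A where "A = mi (R (Suc n))"
  have 1: "of_nat (Suc n) * smult (inverse (fact (Suc n))) B = smult k B" for B :: "real poly"
  proof -
    have "real (Suc n) * inverse (fact (Suc n)) = k" by (simp add: k_def)
    then show ?thesis by (simp only: ofnat_smult smult_smult)
  qed
  have "L Gr $ n = smult k (mi (R (Suc (Suc n)))) - xx^2 * (of_nat n * smult k A) - xx * cc * pderiv (smult k A)"
    unfolding L_nth Gr_def fps_nth_Abs_fps 1 A_def k_def by (rule refl)
  also have "\<dots> = smult k (mi (R (Suc (Suc n))) - xx^2 * (of_nat n * A) - xx * cc * pderiv A)"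
    by (simp add: pderiv_smult smult_diff_right smult_add_right algebra_simps del: R.simps)
  also have "mi (R (Suc (Suc n))) - xx^2 * (of_nat n * A) - xx * cc * pderiv A = (1 + xx^2) * A"
    unfolding mi_R_rec A_def[symmetric] by (simp add: smult_add_left ofnat_smult algebra_simps del: R.simps)
  finally show "L Gr $ n = (fps_const (1 + xx^2) * Gr) $ n"
    by (simp add: Gr_def A_def k_def)
qed

lemma pderiv_xx: "pderiv xx = 1" by (simp add: xx_def pderiv_pCons)
lemma cc_eq: "cc = [:1, 0, -1:]" by (simp add: cc_def xx_def power2_eq_square one_pCons)
lemma pderiv_cc: "pderiv cc = - 2 * xx"
proof -
  have "pderiv cc = [:0, -2:]" unfolding cc_eq by (simp add: pderiv_pCons)
  also have "\<dots> = - 2 * xx" by (simp add: xx_def numeral_poly)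
  finally show ?thesis .
qed

lemma cc_pderiv_pow: "cc * pderiv (cc ^ j) = of_nat j * cc ^ j * pderiv cc"
proof (cases j)
  case (Suc m)
  show ?thesis unfolding Suc pderiv_power_Suc ofnat_smult[symmetric] by (simp only: power_Suc mult_ac)
qed simp

lemma yv_odd: "yv (2 * j + 1) = cc ^ j" by (simp add: yv_def)
lemma yv_even: "yv (2 * j + 2) = - (cc ^ j)" by (simp add: yv_def)

lemma aux_even: "- (y::real poly) = (x^2 * of_nat (2*j) - 1) * y + x * (of_nat j * y * (- 2 * x))"
  by (simp add: algebra_simps power2_eq_square)
lemma aux_odd: "(1 - x^2) * (y::real poly) = - ((x^2 * of_nat (2*j+1) - 1) * y) + - (x * (of_nat j * y * (- 2 * x)))"
  by (simp add: algebra_simps power2_eq_square)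

lemma yv_rec: "yv (Suc (Suc m)) = (xx^2 * of_nat m - 1) * yv (Suc m) + xx * (cc * pderiv (yv (Suc m)))"
proof (cases "even m")
  case True
  then obtain j where m: "m = 2 * j" by (auto elim: evenE)
  have a: "Suc (Suc (2*j)) = 2 * j + 2" "Suc (2*j) = 2 * j + 1" by auto
  show ?thesis unfolding m a(1) unfolding a(2) yv_odd yv_even cc_pderiv_pow pderiv_cc
    by (rule aux_even)
next
  case False
  then obtain j where m: "m = 2 * j + 1" by (auto elim: oddE)
  have a: "Suc (Suc (2*j+1)) = 2 * (j + 1) + 1" "Suc (2*j+1) = 2 * j + 2" by auto
  have b: "cc ^ (j+1) = (1 - xx^2) * cc ^ j" by (simp only: power_Suc Suc_eq_plus1[symmetric]) (simp only: cc_def)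
  show ?thesis unfolding m a(1) unfolding a(2) yv_odd yv_even pderiv_minus mult_minus_right cc_pderiv_pow pderiv_cc b
    by (rule aux_odd)
qed


lemma yv1: "yv (Suc 0) = 1" by (simp add: yv_def)

lemma aux_P: "- ((1 + x) * ((x^2 * of_nat m - 1) * y + x * ((1 - x^2) * d))) -
    x^2 * (of_nat (Suc m) * (- ((1 + x) * y))) -
    x * (1 - x^2) * (- (y + (1 + x) * d)) = - (1 + x) * (- ((1 + x) * (y::real poly)))"
  by (simp add: algebra_simps power2_eq_square)

lemma Pp_Suc: "Pp $ Suc j = smult (inverse (fact (Suc j))) (- (1 + xx) * yv (Suc j))"
  by (simp add: Pp_def)

lemma L_Pp: "L Pp = fps_const (- (1 + xx)) * Pp"
proof (rule fps_ext)
  fix n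
  show "L Pp $ n = (fps_const (- (1 + xx)) * Pp) $ n"
  proof (cases n)
    case 0
    have "L Pp $ 0 = - (1 + xx) * yv 1" by (simp add: L_nth Pp_def)
    then show ?thesis using 0 by (simp add: yv1 Pp_def)
  next
    case (Suc m)
    define k where "k = (inverse (fact n) :: real)"
    define y where "y = yv (Suc m)"
    define d where "d = pderiv y"
    have 1: "of_nat (Suc n) * smult (inverse (fact (Suc n))) B = smult k B" for B :: "real poly"
    proof -
      have "real (Suc n) * inverse (fact (Suc n)) = k" by (simp add: k_def)
      then show ?thesis by (simp only: ofnat_smult smult_smult)
    qed
    have "L Pp $ n = of_nat (Suc n) * smult (inverse (fact (Suc n))) (- (1 + xx) * yv (Suc n)) - xx^2 * (of_nat n * smult k (- (1 + xx) * y))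
        - xx * cc * pderiv (smult k (- (1 + xx) * y))"
      using Suc by (simp only: L_nth Pp_Suc k_def y_def)
    also have "\<dots> = smult k (- (1 + xx) * yv (Suc n)) - xx^2 * (of_nat n * smult k (- (1 + xx) * y))
        - xx * cc * pderiv (smult k (- (1 + xx) * y))" by (simp only: 1)
    also have "\<dots> = smult k (- (1 + xx) * ((xx^2 * of_nat m - 1) * y + xx * (cc * d)) - xx^2 * (of_nat n * (- (1 + xx) * y))
        - xx * cc * (- (y + (1 + xx) * d)))"
      unfolding Suc yv_rec y_def[symmetric] d_def[symmetric]
      by (simp add: d_def pderiv_smult pderiv_mult pderiv_minus pderiv_add pderiv_diff pderiv_xx smult_diff_right smult_minus_right smult_add_right algebra_simps)
    also have "- (1 + xx) * ((xx^2 * of_nat m - 1) * y + xx * (cc * d)) - xx^2 * (of_nat n * (- (1 + xx) * y))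
        - xx * cc * (- (y + (1 + xx) * d)) = - (1 + xx) * (- (1 + xx) * y)"
      unfolding Suc cc_def by (simp add: algebra_simps power2_eq_square)
    finally show ?thesis using Suc by (simp add: Pp_def k_def y_def)
  qed
qed

lemma L_const: "L (fps_const (1 + xx)) = fps_const (xx^2 - xx) * fps_const (1 + xx)"
proof (rule fps_ext)
  fix n
  show "L (fps_const (1 + xx)) $ n = (fps_const (xx^2 - xx) * fps_const (1 + xx)) $ n"
    by (cases n) (simp_all add: L_nth pderiv_add pderiv_xx cc_def algebra_simps power2_eq_square)
qed

lemma L_unique:
  assumes "L F = fps_const a * F" "L G = fps_const a * G" "F $ 0 = G $ 0"
  shows "F = G"
proof (rule fps_ext)
  fix n
  show "F $ n = G $ n"
  proof (induction n)
    case 0 then show ?case using assms(3) by simp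
  next
    case (Suc n)
    have "L F $ n = a * F $ n" "L G $ n = a * G $ n" using assms(1,2) by simp_all
    then have "of_nat (Suc n) * F $ Suc n = of_nat (Suc n) * G $ Suc n"
      unfolding L_nth using Suc by (simp add: algebra_simps)
    then show ?case by (simp del: of_nat_Suc)
  qed
qed

lemma GP: "Gr * Pp = fps_const (1 + xx)"
proof (rule L_unique[of _ "xx^2 - xx"])
  show "L (Gr * Pp) = fps_const (xx^2 - xx) * (Gr * Pp)"
  proof -
    have e: "fps_const (xx^2 - xx) = fps_const (1 + xx^2) + fps_const (- (1 + xx))"
      by (simp only: fps_const_add[symmetric]) (simp add: algebra_simps)
    show ?thesis unfolding L_mult L_Gr L_Pp by (simp only: e distrib_right distrib_left mult_ac)
  qed
  show "L (fps_const (1 + xx)) = fps_const (xx^2 - xx) * fps_const (1 + xx)" by (rule L_const)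
  show "(Gr * Pp) $ 0 = fps_const (1 + xx) $ 0"
    by (simp add: Gr_def Pp_def mi_pCons xx_def one_pCons)
qed


definition ev :: "real \<Rightarrow> real poly fps \<Rightarrow> real fps" where
  "ev x F = Abs_fps (\<lambda>n. poly (F $ n) x)"

lemma ev_mult: "ev x (F * G) = ev x F * ev x G"
  by (rule fps_ext) (simp add: ev_def fps_mult_nth poly_sum)

lemma ev_const: "ev x (fps_const p) = fps_const (poly p x)"
  by (rule fps_ext) (simp add: ev_def)

definition hh :: "real \<Rightarrow> real fps" where
  "hh x = Abs_fps (\<lambda>i. if i = 0 then 0 else (-1) ^ (i - 1) * (1 - x^2) ^ ((i - 1) div 2) / fact i)"

lemma poly_yv: "poly (yv i) x = (-1) ^ (i - 1) * (1 - x^2) ^ ((i - 1) div 2)"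
  by (simp add: yv_def cc_def xx_def poly_power)

lemma ev_Pp: "ev x Pp = 1 - fps_const (1 + x) * hh x"
proof (rule fps_ext)
  fix n show "ev x Pp $ n = (1 - fps_const (1 + x) * hh x) $ n"
  proof (cases n)
    case 0 then show ?thesis by (simp add: ev_def Pp_def hh_def)
  next
    case (Suc j)
    have 1: "ev x Pp $ n = inverse (fact (Suc j)) * (- (1 + x) * poly (yv (Suc j)) x)"
      by (simp add: ev_def Pp_Suc Suc xx_def del: fact_Suc)
    have 2: "(1 - fps_const (1+x) * hh x) $ n = - ((1+x) * (poly (yv (Suc j)) x / fact (Suc j)))"
      by (simp add: hh_def poly_yv Suc del: fact_Suc)
    show ?thesis unfolding 1 2 by (simp add: divide_inverse algebra_simps del: fact_Suc)
  qed
qed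

lemma geo:
  fixes g a h :: "real fps"
  assumes "g = a + a * h * g"
  shows "g = (\<Sum>k<N. a ^ (k + 1) * h ^ k) + (a * h) ^ N * g"
proof (induction N)
  case 0 then show ?case by simp
next
  case (Suc N)
  from assms have "(a*h)^N * g = (a*h)^N * (a + a*h*g)" by (rule arg_cong)
  also have "\<dots> = a ^ (N + 1) * h ^ N + (a * h) ^ Suc N * g"
    by (simp add: algebra_simps power_mult_distrib)
  finally have e1: "(a*h)^N * g = a ^ (N + 1) * h ^ N + (a * h) ^ Suc N * g" .
  have A: "(\<Sum>k<Suc N. a^(k+1)*h^k) + (a*h)^Suc N*g = (\<Sum>k<N. a^(k+1)*h^k) + (a^(N+1)*h^N + (a*h)^Suc N * g)"
    by (simp only: sum.lessThan_Suc add.assoc)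
  show ?case unfolding A using Suc.IH e1 by metis
qed

lemma g_coeff:
  fixes g h :: "real fps" and c :: real
  assumes "g * (1 - fps_const c * h) = fps_const c" "h $ 0 = 0"
  shows "g $ n = (\<Sum>k<Suc n. c ^ (k + 1) * (h ^ k $ n))"
proof -
  have "g = fps_const c + fps_const c * h * g" using assms(1) by (simp add: algebra_simps)
  then have e: "g = (\<Sum>k<Suc n. fps_const c ^ (k + 1) * h ^ k) + (fps_const c * h) ^ Suc n * g"
    by (rule geo)
  have z: "(fps_const c * h) ^ Suc n $ j = 0" if "j < Suc n" for j
    using startsby_zero_power_prefix[of "fps_const c * h" "Suc n"] assms(2) that by simp
  have "((fps_const c * h) ^ Suc n * g) $ n = 0"
    unfolding fps_mult_nth by (rule sum.neutral) (simp add: z del: power_Suc)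
  then have "g $ n = (\<Sum>k<Suc n. fps_const c ^ (k + 1) * h ^ k) $ n"
    by (subst e) simp
  then show ?thesis by (simp add: fps_sum_nth del: power_Suc)
qed

lemma sign_pow:
  fixes F G :: "real fps"
  assumes "\<And>i. G $ i = (-1) ^ (i + 1) * F $ i"
  shows "G ^ k $ n = (-1) ^ (n + k) * F ^ k $ n"
proof (induction k arbitrary: n)
  case 0 then show ?case by simp
next
  case (Suc k)
  have "G ^ Suc k $ n = (\<Sum>i=0..n. G $ i * G ^ k $ (n - i))" by (simp add: fps_mult_nth)
  also have "\<dots> = (\<Sum>i=0..n. (-1) ^ (n + Suc k) * (F $ i * F ^ k $ (n - i)))"
  proof (rule sum.cong)
    fix i assume "i \<in> {0..n}"
    then have "i + 1 + (n - i + k) = n + Suc k" by simp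
    then have "(-1::real) ^ (i + 1) * (-1) ^ (n - i + k) = (-1) ^ (n + Suc k)"
      by (metis power_add)
    then show "G $ i * G ^ k $ (n - i) = (-1) ^ (n + Suc k) * (F $ i * F ^ k $ (n - i))"
      unfolding assms Suc.IH by (simp add: algebra_simps)
  qed simp
  also have "\<dots> = (-1) ^ (n + Suc k) * F ^ Suc k $ n"
    by (simp add: fps_mult_nth sum_distrib_left)
  finally show ?case .
qed


theorem mainTheorem4:
  fixes n :: nat and x :: real
  assumes "n \<ge> 1"
  shows "poly (map_poly of_int (R (n + 1))) x =
    (\<Sum>k = 1..n. (-1) ^ (n - k) * fact k * (1 + x) ^ (k + 1)
       * partial_bell (\<lambda>i. (1 - x ^ 2) ^ ((i - 1) div 2)) n k)"
proof -
  define xs where "xs = (\<lambda>i::nat. (1 - x ^ 2) ^ ((i - 1) div 2))"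
  define XF where "XF = Abs_fps (\<lambda>i. if i = 0 then 0 else xs i / fact i)"
  define T where "T = (\<lambda>k. (1 + x) ^ (k + 1) * (hh x ^ k $ n))"
  have "ev x (Gr * Pp) = ev x (fps_const (1 + xx))" by (simp only: GP)
  then have ge: "ev x Gr * (1 - fps_const (1 + x) * hh x) = fps_const (1 + x)"
    by (simp add: ev_mult ev_Pp ev_const xx_def)
  have h0: "hh x $ 0 = 0" by (simp add: hh_def)
  have gc: "ev x Gr $ n = (\<Sum>k<Suc n. T k)"
    unfolding T_def by (rule g_coeff[OF ge h0])
  have gn: "ev x Gr $ n = poly (map_poly of_int (R (n + 1))) x / fact n"
    by (simp add: ev_def Gr_def divide_inverse)
  have lhs: "poly (map_poly of_int (R (n + 1))) x = fact n * (\<Sum>k<Suc n. T k)"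
    using gn gc by (simp add: field_simps)
  have sgn: "hh x $ i = (-1) ^ (i + 1) * XF $ i" for i
  proof (cases i)
    case (Suc j) then show ?thesis by (simp add: hh_def XF_def xs_def)
  qed (simp add: hh_def XF_def)
  have T0: "T 0 = 0" using assms by (simp add: T_def)
  have "(\<Sum>k<Suc n. T k) = (\<Sum>k\<in>{0} \<union> {1..n}. T k)"
    by (rule sum.cong) auto
  also have "\<dots> = (\<Sum>k=1..n. T k)" by (subst sum.union_disjoint) (auto simp: T0)
  finally have s: "(\<Sum>k<Suc n. T k) = (\<Sum>k=1..n. T k)" .
  have trm: "(-1) ^ (n - k) * fact k * (1 + x) ^ (k + 1) * partial_bell xs n k = fact n * T k"
    if "k \<in> {1..n}" for k
  proof -
    have kn: "k \<le> n" using that by auto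
    have pb: "partial_bell xs n k = fact n * (inverse (fact k) * XF ^ k $ n)"
      by (simp add: partial_bell_def XF_def)
    have e: "(-1::real) ^ (n - k) = (-1) ^ (n + k)"
    proof -
      have a: "n + k = (n - k) + 2 * k" using kn by simp
      have "(-1::real)^(n+k) = (-1)^(n-k) * ((-1)^2)^k" unfolding a power_add power_mult ..
      then show ?thesis by simp
    qed
    have "hh x ^ k $ n = (-1) ^ (n + k) * XF ^ k $ n" by (rule sign_pow[OF sgn])
    then show ?thesis unfolding pb T_def e by simp
  qed
  show ?thesis
    unfolding lhs s xs_def[symmetric] sum_distrib_left by (rule sum.cong[OF refl]) (rule trm[symmetric])
qed

end
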